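(* Let $G=(V,E)$ be a transitive and finite directed graph with in-degree at least $2$ at every vertex, let $v\in V$ have in-degree at least $3$, and let $\widehat{G}_v$ be the $v$-lag of $G$. Then the map $\theta$ is a bijection between the set $E^\bullet$ of finite paths of $G$ and the set of finite paths in $\widehat{G}_v$ whose range and source both lie in $V$.
   Context: A directed graph $G=(V,E,r,s)$; in-degree of $v$ is $|r^{-1}(v)|$. $E^\bullet$ denotes the finite paths $\lambda=e_1\cdots e_n$ ($s(e_i)=r(e_{i+1})$), vertices counting as paths of length $0$; "an edge from $u$ to $w$" has source $u$, range $w$; $G$ is transitive if there is a path between any two vertices. The $v$-lag $\widehat{G}_v$ at a vertex $v$ of in-degree $d_v\ge3$: enumerate edges with range $v$ as $e_0,\dots,e_{d_v-1}$ with sources $u_0,\dots,u_{d_v-1}$; keep all vertices and all edges not ranging in $v$; add vertices $v_1,\dots,v_{d_v-2}$, an edge $f_1$ from $v_1$ to $v$ and edges $f_i$ from $v_i$ to $v_{i-1}$ ($2\le i\le d_v-2$); replace $e_0$ by $\hat e_0$ from $u_0$ to $v$, $e_j$ by $\hat e_j$ from $u_j$ to $v_j$ ($1\le j\le d_v-2$), and $e_{d_v-1}$ by $\hat e_{d_v-1}$ from $u_{d_v-1}$ to $v_{d_v-2}$. The map $\theta$: $\theta(u)=u$ for $u\in V$ (via $V\subseteq\widehat{V}_v$), $\theta(e)=e$ for $e\in E$ with $r(e)\neq v$, $\theta(e_j)=f_1f_2\cdots f_j\hat e_j$ for $0\le j\le d_v-1$, where for $j=d_v-1$ this means $f_1\cdots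 f_{d_v-2}\hat e_{d_v-1}$ and for $j=0$ just $\hat e_0$; extended to paths by concatenation. *)

theory Defs
  imports Main
begin

definition is_graph :: "'v set \<Rightarrow> 'e set \<Rightarrow> ('e \<Rightarrow> 'v) \<Rightarrow> ('e \<Rightarrow> 'v) \<Rightarrow> bool" where
  "is_graph V E r s \<longleftrightarrow> (\<forall>e\<in>E. r e \<in> V \<and> s e \<in> V)"

definition in_edges :: "'e set \<Rightarrow> ('e \<Rightarrow> 'v) \<Rightarrow> 'v \<Rightarrow> 'e set" where
  "in_edges E r u = {e \<in> E. r e = u}"

definition in_degree :: "'e set \<Rightarrow> ('e \<Rightarrow> 'v) \<Rightarrow> 'v \<Rightarrow> nat" where
  "in_degree E r u = card (in_edges E r u)"

text \<open>Finite paths: a pair (u, es).  (u, []) is the vertex u as a path of length 0;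
  (u, [e1,...,en]) with n \<ge> 1 is the path e1...en, where u = r e1 is its range and
  s(e_i) = r(e_{i+1}).\<close>
definition paths :: "'v set \<Rightarrow> 'e set \<Rightarrow> ('e \<Rightarrow> 'v) \<Rightarrow> ('e \<Rightarrow> 'v) \<Rightarrow> ('v \<times> 'e list) set" where
  "paths V E r s = {(u, es). u \<in> V \<and> set es \<subseteq> E \<and> (es \<noteq> [] \<longrightarrow> r (hd es) = u)
      \<and> (\<forall>i. Suc i < length es \<longrightarrow> s (es ! i) = r (es ! Suc i))}"

definition prange :: "'v \<times> 'e list \<Rightarrow> 'v" where
  "prange p = fst p"

definition psource :: "('e \<Rightarrow> 'v) \<Rightarrow> 'v \<times> 'e list \<Rightarrow> 'v" where
  "psource s p = (if snd p = [] then fst p else s (last (snd p)))"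

definition transitive_graph :: "'v set \<Rightarrow> 'e set \<Rightarrow> ('e \<Rightarrow> 'v) \<Rightarrow> ('e \<Rightarrow> 'v) \<Rightarrow> bool" where
  "transitive_graph V E r s \<longleftrightarrow>
     (\<forall>u\<in>V. \<forall>w\<in>V. \<exists>p\<in>paths V E r s. prange p = u \<and> psource s p = w)"

text \<open>The v-lag, relative to an enumeration en : {0..<d} \<rightarrow> r^{-1}(v) of the edges ranging in v.
  Vertices of the lag: Inl u for u \<in> V, and Inr i for the new vertex v_i (1 \<le> i \<le> d-2).
  Edges of the lag: Inl e for e \<in> E (for r e = v this is \<hat>e_j), and Inr i for f_i.\<close>

definition lag_index :: "'e set \<Rightarrow> ('e \<Rightarrow> 'v) \<Rightarrow> 'v \<Rightarrow> (nat \<Rightarrow> 'e) \<Rightarrow> 'e \<Rightarrow> nat" where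
  "lag_index E r v en e = the_inv_into {..<in_degree E r v} en e"

definition lag_V :: "'v set \<Rightarrow> 'e set \<Rightarrow> ('e \<Rightarrow> 'v) \<Rightarrow> 'v \<Rightarrow> ('v + nat) set" where
  "lag_V V E r v = Inl ` V \<union> Inr ` {1..in_degree E r v - 2}"

definition lag_E :: "'e set \<Rightarrow> ('e \<Rightarrow> 'v) \<Rightarrow> 'v \<Rightarrow> ('e + nat) set" where
  "lag_E E r v = Inl ` E \<union> Inr ` {1..in_degree E r v - 2}"

fun lag_r :: "'e set \<Rightarrow> ('e \<Rightarrow> 'v) \<Rightarrow> 'v \<Rightarrow> (nat \<Rightarrow> 'e) \<Rightarrow> 'e + nat \<Rightarrow> 'v + nat" where
  "lag_r E r v en (Inl e) =
     (if r e = v then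
        (let j = lag_index E r v en e; d = in_degree E r v in
          if j = 0 then Inl v
          else if j \<le> d - 2 then Inr j
          else Inr (d - 2))
      else Inl (r e))"
| "lag_r E r v en (Inr i) = (if i = 1 then Inl v else Inr (i - 1))"

fun lag_s :: "('e \<Rightarrow> 'v) \<Rightarrow> 'e + nat \<Rightarrow> 'v + nat" where
  "lag_s s (Inl e) = Inl (s e)"
| "lag_s s (Inr i) = Inr i"

definition theta_edge :: "'e set \<Rightarrow> ('e \<Rightarrow> 'v) \<Rightarrow> 'v \<Rightarrow> (nat \<Rightarrow> 'e) \<Rightarrow> 'e \<Rightarrow> ('e + nat) list" where
  "theta_edge E r v en e =
     (if r e = v then
        map Inr [1..<Suc (min (lag_index E r v en e) (in_degree E r v - 2))] @ [Inl e]
      else [Inl e])"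

definition theta :: "'e set \<Rightarrow> ('e \<Rightarrow> 'v) \<Rightarrow> 'v \<Rightarrow> (nat \<Rightarrow> 'e) \<Rightarrow> 'v \<times> 'e list \<Rightarrow> ('v + nat) \<times> ('e + nat) list" where
  "theta E r v en p = (Inl (fst p), concat (map (theta_edge E r v en) (snd p)))"

end

theory Submission
  imports Defs
begin

primrec walk :: "'e set \<Rightarrow> ('e \<Rightarrow> 'v) \<Rightarrow> ('e \<Rightarrow> 'v) \<Rightarrow> 'v \<Rightarrow> 'e list \<Rightarrow> bool" where
  "walk E r s x [] = True"
| "walk E r s x (e#es) = (e \<in> E \<and> r e = x \<and> walk E r s (s e) es)"

primrec wend :: "('e \<Rightarrow> 'v) \<Rightarrow> 'v \<Rightarrow> 'e list \<Rightarrow> 'v" where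
  "wend s x [] = x"
| "wend s x (e#es) = wend s (s e) es"

lemma walk_append: "walk E r s x (xs @ ys) = (walk E r s x xs \<and> walk E r s (wend s x xs) ys)"
  by (induction xs arbitrary: x) auto

lemma wend_append: "wend s x (xs @ ys) = wend s (wend s x xs) ys"
  by (induction xs arbitrary: x) auto

lemma walk_aux:
  "(set es \<subseteq> E \<and> (es \<noteq> [] \<longrightarrow> r (hd es) = u) \<and> (\<forall>i. Suc i < length es \<longrightarrow> s (es ! i) = r (es ! Suc i)))
   = walk E r s u es"
proof (induction es arbitrary: u)
  case Nil
  then show ?case by simp
next
  case (Cons e es)
  have "(\<forall>i. Suc i < length (e#es) \<longrightarrow> s ((e#es) ! i) = r ((e#es) ! Suc i)) =
        ((es \<noteq> [] \<longrightarrow> s e = r (hd es)) \<and> (\<forall>i. Suc i < length es \<longrightarrow> s (es ! i) = r (es ! Suc i)))"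
    (is "?L = ?R")
  proof
    assume L: ?L
    show ?R
    proof
      show "es \<noteq> [] \<longrightarrow> s e = r (hd es)" using L[rule_format, of 0] by (cases es) auto
      show "\<forall>i. Suc i < length es \<longrightarrow> s (es ! i) = r (es ! Suc i)"
        using L by (metis Suc_less_eq length_Cons nth_Cons_Suc)
    qed
  next
    assume R: ?R
    show ?L
    proof (intro allI impI)
      fix i assume "Suc i < length (e#es)"
      then show "s ((e#es) ! i) = r ((e#es) ! Suc i)"
        using R by (cases i) (auto simp: hd_conv_nth)
    qed
  qed
  then show ?case using Cons.IH[of "s e"] by auto
qed

lemma paths_walk: "(u, es) \<in> paths V E r s \<longleftrightarrow> u \<in> V \<and> walk E r s u es"
  unfolding paths_def using walk_aux[of es E r u s] by auto

lemma psource_wend: "psource s (u, es) = wend s u es"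
  unfolding psource_def by (induction es arbitrary: u) auto

lemma walk_Inr:
  assumes "m \<le> in_degree E r v - 2"
  shows "walk (lag_E E r v) (lag_r E r v en) (lag_s s) (Inl v) (map Inr [1..<Suc m]) \<and>
         wend (lag_s s) (Inl v) (map Inr [1..<Suc m]) = (if m = 0 then Inl v else Inr m)"
  using assms
proof (induction m)
  case 0
  then show ?case by simp
next
  case (Suc m)
  have eq: "map Inr [1..<Suc (Suc m)] = map Inr [1..<Suc m] @ [Inr (Suc m)]" by simp
  show ?case using Suc unfolding eq walk_append wend_append
    by (auto simp: lag_E_def)
qed

lemma walk_theta_edge:
  assumes "e \<in> E" "3 \<le> in_degree E r v"
  shows "walk (lag_E E r v) (lag_r E r v en) (lag_s s) (Inl (r e)) (theta_edge E r v en e) \<and>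
         wend (lag_s s) (Inl (r e)) (theta_edge E r v en e) = Inl (s e)"
proof (cases "r e = v")
  case True
  define m where "m = min (lag_index E r v en e) (in_degree E r v - 2)"
  have th: "theta_edge E r v en e = map Inr [1..<Suc m] @ [Inl e]"
    using True unfolding theta_edge_def m_def by simp
  have "m \<le> in_degree E r v - 2" unfolding m_def by simp
  from walk_Inr[OF this, of en s]
  show ?thesis unfolding th walk_append wend_append using True assms
    by (auto simp: lag_E_def m_def Let_def)
next
  case False
  then show ?thesis using assms by (auto simp: theta_edge_def lag_E_def)
qed

lemma walk_theta:
  assumes "walk E r s u es" "3 \<le> in_degree E r v"
  shows "walk (lag_E E r v) (lag_r E r v en) (lag_s s) (Inl u) (concat (map (theta_edge E r v en) es)) \<and>
         wend (lag_s s) (Inl u) (concat (map (theta_edge E r v en) es)) = Inl (wend s u es)"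
  using assms
proof (induction es arbitrary: u)
  case Nil
  then show ?case by simp
next
  case (Cons e es)
  then have "e \<in> E" "r e = u" "walk E r s (s e) es" by auto
  with walk_theta_edge[OF this(1) Cons.prems(2), of en s] Cons.IH[of "s e"] Cons.prems(2)
  show ?case by (simp add: walk_append wend_append)
qed

definition dec :: "('e + nat) list \<Rightarrow> 'e list" where
  "dec fs = map projl (filter isl fs)"

lemma dec_theta: "dec (concat (map (theta_edge E r v en) es)) = es"
  by (induction es) (auto simp: dec_def theta_edge_def)


lemma walk_dec:
  assumes d3: "3 \<le> in_degree E r v"
  shows "walk (lag_E E r v) (lag_r E r v en) (lag_s s) x fs \<Longrightarrow> isl (wend (lag_s s) x fs) \<Longrightarrow>
    (\<forall>u. x = Inl u \<longrightarrow> walk E r s u (dec fs) \<and> concat (map (theta_edge E r v en) (dec fs)) = fs) \<and>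
    (\<forall>i. x = Inr i \<longrightarrow> (\<exists>e es. e \<in> E \<and> r e = v \<and> i \<le> min (lag_index E r v en e) (in_degree E r v - 2)
        \<and> walk E r s (s e) es \<and>
        fs = map Inr [Suc i..<Suc (min (lag_index E r v en e) (in_degree E r v - 2))] @ Inl e #
             concat (map (theta_edge E r v en) es)))"
proof (induction fs arbitrary: x)
  case Nil
  then show ?case by (auto simp: dec_def)
next
  case (Cons f fs)
  from Cons.prems have f: "f \<in> lag_E E r v" "lag_r E r v en f = x"
    and w: "walk (lag_E E r v) (lag_r E r v en) (lag_s s) (lag_s s f) fs"
    and isl: "isl (wend (lag_s s) (lag_s s f) fs)" by auto
  note IH = Cons.IH[OF w isl]
  show ?case
  proof (cases f)
    case (Inl e)
    have eE: "e \<in> E" using f Inl by (auto simp: lag_E_def)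
    from IH Inl have IH1: "walk E r s (s e) (dec fs) \<and> concat (map (theta_edge E r v en) (dec fs)) = fs"
      by simp
    have decf: "dec (f # fs) = e # dec fs" using Inl by (simp add: dec_def)
    show ?thesis
    proof (rule conjI; intro allI impI)
      fix u assume xu: "x = Inl u"
      have "r e = u \<and> theta_edge E r v en e = [Inl e]"
      proof (cases "r e = v")
        case True
        then have "lag_index E r v en e = 0" using f Inl xu
          by (auto simp: Let_def split: if_splits)
        then show ?thesis using True f Inl xu by (auto simp: theta_edge_def)
      next
        case False
        then show ?thesis using f Inl xu by (auto simp: theta_edge_def)
      qed
      then show "walk E r s u (dec (f # fs)) \<and> concat (map (theta_edge E r v en) (dec (f # fs))) = f # fs"
        using decf IH1 eE Inl by simp
    next
      fix i assume xi: "x = Inr i"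
      have rv: "r e = v" using f Inl xi by (auto split: if_splits)
      have "i = min (lag_index E r v en e) (in_degree E r v - 2)"
        using f Inl xi rv by (auto simp: Let_def split: if_splits)
      then show "\<exists>e' es. e' \<in> E \<and> r e' = v \<and> i \<le> min (lag_index E r v en e') (in_degree E r v - 2)
        \<and> walk E r s (s e') es \<and>
        f # fs = map Inr [Suc i..<Suc (min (lag_index E r v en e') (in_degree E r v - 2))] @ Inl e' #
             concat (map (theta_edge E r v en) es)"
        using IH1 eE rv Inl by (intro exI[of _ e] exI[of _ "dec fs"]) auto
    qed
  next
    case (Inr k)
    have k: "1 \<le> k" "k \<le> in_degree E r v - 2" using f Inr by (auto simp: lag_E_def)
    from IH Inr obtain e es where e: "e \<in> E" "r e = v"
      "k \<le> min (lag_index E r v en e) (in_degree E r v - 2)" "walk E r s (s e) es"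
      and fs: "fs = map Inr [Suc k..<Suc (min (lag_index E r v en e) (in_degree E r v - 2))] @ Inl e #
             concat (map (theta_edge E r v en) es)"
      by auto
    have ffs: "f # fs = map Inr [k..<Suc (min (lag_index E r v en e) (in_degree E r v - 2))] @ Inl e #
             concat (map (theta_edge E r v en) es)"
    proof -
      have "[k..<Suc (min (lag_index E r v en e) (in_degree E r v - 2))] =
            k # [Suc k..<Suc (min (lag_index E r v en e) (in_degree E r v - 2))]"
        using e(3) by (intro upt_conv_Cons) linarith
      then show ?thesis using fs Inr by simp
    qed
    show ?thesis
    proof (rule conjI; intro allI impI)
      fix u assume xu: "x = Inl u"
      have k1: "k = 1" "u = v" using f Inr xu by (auto split: if_splits)
      have th: "f # fs = concat (map (theta_edge E r v en) (e # es))"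
        using ffs k1 e by (simp add: theta_edge_def)
      have "dec (f # fs) = e # es" unfolding th dec_theta ..
      then show "walk E r s u (dec (f # fs)) \<and> concat (map (theta_edge E r v en) (dec (f # fs))) = f # fs"
        using th e k1 by simp
    next
      fix i assume xi: "x = Inr i"
      have "k = Suc i" using f Inr xi k by (auto split: if_splits)
      then show "\<exists>e' es. e' \<in> E \<and> r e' = v \<and> i \<le> min (lag_index E r v en e') (in_degree E r v - 2)
        \<and> walk E r s (s e') es \<and>
        f # fs = map Inr [Suc i..<Suc (min (lag_index E r v en e') (in_degree E r v - 2))] @ Inl e' #
             concat (map (theta_edge E r v en) es)"
        using ffs e by (intro exI[of _ e] exI[of _ es]) auto
    qed
  qed
qed


lemma wend_in:
  assumes "is_graph V E r s" "walk E r s u es" "u \<in> V"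
  shows "wend s u es \<in> V"
  using assms(2,3)
proof (induction es arbitrary: u)
  case Nil then show ?case by simp
next
  case (Cons e es)
  then show ?case using assms(1) by (auto simp: is_graph_def)
qed

theorem lemma3p7:
  fixes V :: "'v set" and E :: "'e set" and r s :: "'e \<Rightarrow> 'v" and v :: 'v and en :: "nat \<Rightarrow> 'e"
  assumes "is_graph V E r s"
    and "finite V" and "finite E"
    and "transitive_graph V E r s"
    and "\<forall>u\<in>V. in_degree E r u \<ge> 2"
    and "v \<in> V" and "in_degree E r v \<ge> 3"
    and "bij_betw en {..<in_degree E r v} (in_edges E r v)"
  shows "bij_betw (theta E r v en) (paths V E r s)
           {p \<in> paths (lag_V V E r v) (lag_E E r v) (lag_r E r v en) (lag_s s).
              prange p \<in> Inl ` V \<and> psource (lag_s s) p \<in> Inl ` V}"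
  unfolding bij_betw_def
proof (intro conjI)
  show "inj_on (theta E r v en) (paths V E r s)"
  proof (rule inj_onI)
    fix p q assume "theta E r v en p = theta E r v en q"
    then have "fst p = fst q" "dec (concat (map (theta_edge E r v en) (snd p))) =
                 dec (concat (map (theta_edge E r v en) (snd q)))"
      by (auto simp: theta_def)
    then show "p = q" unfolding dec_theta by (simp add: prod_eq_iff)
  qed
next
  show "theta E r v en ` paths V E r s =
    {p \<in> paths (lag_V V E r v) (lag_E E r v) (lag_r E r v en) (lag_s s).
              prange p \<in> Inl ` V \<and> psource (lag_s s) p \<in> Inl ` V}"
  proof (intro equalityI subsetI)
    fix p assume "p \<in> theta E r v en ` paths V E r s"
    then obtain u es where p: "p = theta E r v en (u, es)" and ues: "(u, es) \<in> paths V E r s"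
      by auto
    have u: "u \<in> V" and w: "walk E r s u es" using ues by (auto simp: paths_walk)
    from walk_theta[OF w assms(7), of en] wend_in[OF assms(1) w u]
    show "p \<in> {p \<in> paths (lag_V V E r v) (lag_E E r v) (lag_r E r v en) (lag_s s).
              prange p \<in> Inl ` V \<and> psource (lag_s s) p \<in> Inl ` V}"
      using u unfolding p theta_def
      by (auto simp: paths_walk psource_wend prange_def lag_V_def)
  next
    fix p assume "p \<in> {p \<in> paths (lag_V V E r v) (lag_E E r v) (lag_r E r v en) (lag_s s).
              prange p \<in> Inl ` V \<and> psource (lag_s s) p \<in> Inl ` V}"
    then obtain u fs where p: "p = (Inl u, fs)" and u: "u \<in> V"
      and w: "walk (lag_E E r v) (lag_r E r v en) (lag_s s) (Inl u) fs"
      and e: "wend (lag_s s) (Inl u) fs \<in> Inl ` V"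
      by (cases p) (auto simp: paths_walk psource_wend prange_def)
    have "isl (wend (lag_s s) (Inl u) fs)" using e by auto
    from walk_dec[OF assms(7) w this]
    have "walk E r s u (dec fs)" "concat (map (theta_edge E r v en) (dec fs)) = fs" by auto
    then have "p = theta E r v en (u, dec fs)" "(u, dec fs) \<in> paths V E r s"
      using p u by (auto simp: theta_def paths_walk)
    then show "p \<in> theta E r v en ` paths V E r s" by blast
  qed
qed

end
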